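(* Let $n\ge5$ and let $C=(1,c_2,\dots,c_{n-1},2c_{n-1}-c_2)$ be a system with $n$ coin types, with subsystem $C'=(1,c_2,\dots,c_{n-1})$. Then $C$ is canonical and $C'$ is noncanonical if and only if $C=(1,2,\dots,n-3,c_{n-2},c_{n-2}+1,2c_{n-2})$ and $c_{n-2}>n-2$.
   Context: A system is a tuple $C=(c_1,\dots,c_n)$ of integers with $1=c_1<c_2<\dots<c_n$; for $k\le n$, $(c_1,\dots,c_k)$ is a subsystem. For a positive integer $v$, $\mathrm{opt}_C(v)$ is the minimum of $\sum_i x_i$ over $x\in\mathbb{Z}_{\ge0}^n$ with $\sum_i c_ix_i=v$. The greedy representation of $v$ is produced by: for $i=n$ down to $1$, while $c_i\le$ remaining value, take a coin $c_i$. $\mathrm{grd}_C(v)$ is its number of coins. A positive integer $w$ is a counterexample if $\mathrm{opt}_C(w)<\mathrm{grd}_C(w)$; $C$ is canonical if it has none, noncanonical otherwise. *)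

theory Defs
  imports Main
begin

text \<open>A coin system is a list C = [c_1,...,c_n] (0-based: c_i = C!(i-1))
  with c_1 = 1 and strictly increasing entries.\<close>
definition coin_system :: "nat list \<Rightarrow> bool" where
  "coin_system C \<longleftrightarrow> C \<noteq> [] \<and> C ! 0 = 1 \<and> sorted_wrt (<) C"

definition opt :: "nat list \<Rightarrow> nat \<Rightarrow> nat" where
  "opt C v = (LEAST k. \<exists>x :: nat \<Rightarrow> nat.
      (\<Sum>i<length C. C ! i * x i) = v \<and> (\<Sum>i<length C. x i) = k)"

fun greedy_desc :: "nat list \<Rightarrow> nat \<Rightarrow> nat" where
  "greedy_desc [] v = 0"
| "greedy_desc (c # cs) v = v div c + greedy_desc cs (v mod c)"

definition grd :: "nat list \<Rightarrow> nat \<Rightarrow> nat" where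
  "grd C v = greedy_desc (rev C) v"

definition counterexample :: "nat list \<Rightarrow> nat \<Rightarrow> bool" where
  "counterexample C w \<longleftrightarrow> w > 0 \<and> opt C w < grd C w"

definition canonical :: "nat list \<Rightarrow> bool" where
  "canonical C \<longleftrightarrow> (\<forall>w. \<not> counterexample C w)"

end

theory Submission
  imports Defs
begin

definition rep :: "nat list \<Rightarrow> (nat \<Rightarrow> nat) \<Rightarrow> nat \<Rightarrow> bool" where
  "rep C x v \<longleftrightarrow> (\<Sum>i<length C. C ! i * x i) = v"

abbreviation cnt :: "nat list \<Rightarrow> (nat \<Rightarrow> nat) \<Rightarrow> nat" where
  "cnt C x \<equiv> (\<Sum>i<length C. x i)"

lemma opt_le: "rep C x v \<Longrightarrow> opt C v \<le> cnt C x"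
  unfolding opt_def rep_def by (rule Least_le) blast

lemma opt_ex:
  assumes "C \<noteq> []" "C ! 0 = 1"
  shows "\<exists>x. rep C x v \<and> cnt C x = opt C v"
proof -
  let ?x = "\<lambda>i. if i = 0 then v else (0::nat)"
  have "(\<Sum>i<length C. C ! i * ?x i) = (\<Sum>i<length C. if i = 0 then v else 0)"
    by (rule sum.cong) (auto simp: assms)
  also have "\<dots> = v" using assms by (simp add: sum.delta)
  finally have r: "(\<Sum>i<length C. C ! i * ?x i) = v" .
  have "\<exists>k x. (\<Sum>i<length C. C ! i * x i) = v \<and> (\<Sum>i<length C. x i) = k"
    by (rule exI, rule exI, rule conjI, rule r, rule refl)
  hence "\<exists>x. (\<Sum>i<length C. C ! i * x i) = v \<and> (\<Sum>i<length C. x i) = opt C v"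
    unfolding opt_def by (rule LeastI_ex)
  thus ?thesis unfolding rep_def by blast
qed

lemma opt_le_self:
  assumes "C \<noteq> []" "C ! 0 = 1"
  shows "opt C v \<le> v"
proof -
  let ?x = "\<lambda>i. if i = 0 then v else (0::nat)"
  have "(\<Sum>i<length C. C ! i * ?x i) = (\<Sum>i<length C. if i = 0 then v else 0)"
    by (rule sum.cong) (auto simp: assms)
  also have "\<dots> = v" using assms by (simp add: sum.delta)
  finally have "rep C ?x v" unfolding rep_def .
  hence "opt C v \<le> cnt C ?x" by (rule opt_le)
  also have "cnt C ?x = v" using assms by (simp add: sum.delta)
  finally show ?thesis .
qed

lemma sum_upd:
  fixes f :: "nat \<Rightarrow> nat"
  assumes "j < n"
  shows "(\<Sum>i<n. g i ((f(j := a)) i)) = g j a + (\<Sum>i\<in>{..<n} - {j}. g i (f i))"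
proof -
  have "(\<Sum>i<n. g i ((f(j := a)) i)) = g j a + (\<Sum>i\<in>{..<n} - {j}. g i ((f(j := a)) i))"
    using assms by (subst sum.remove[of _ j]) auto
  also have "(\<Sum>i\<in>{..<n} - {j}. g i ((f(j := a)) i)) = (\<Sum>i\<in>{..<n} - {j}. g i (f i))"
    by (rule sum.cong) auto
  finally show ?thesis .
qed

lemma sum_split_j:
  fixes f :: "nat \<Rightarrow> nat"
  assumes "j < n"
  shows "(\<Sum>i<n. g i (f i)) = g j (f j) + (\<Sum>i\<in>{..<n} - {j}. g i (f i))"
  using assms by (subst sum.remove[of _ j]) auto

lemma rep_add:
  assumes "rep C x v" "j < length C"
  shows "rep C (x(j := x j + 1)) (v + C ! j) \<and> cnt C (x(j := x j + 1)) = cnt C x + 1"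
  using assms
  unfolding rep_def
  using sum_upd[OF assms(2), of "\<lambda>i y. C ! i * y" x "x j + 1"]
    sum_split_j[OF assms(2), of "\<lambda>i y. C ! i * y" x]
    sum_upd[OF assms(2), of "\<lambda>i y. y" x "x j + 1"]
    sum_split_j[OF assms(2), of "\<lambda>i y. y" x]
  by (simp add: algebra_simps)

lemma rep_dec:
  assumes "rep C x v" "j < length C" "x j > 0"
  shows "rep C (x(j := x j - 1)) (v - C ! j) \<and> cnt C (x(j := x j - 1)) = cnt C x - 1 \<and> C ! j \<le> v"
proof -
  have e1: "v = C ! j * x j + (\<Sum>i\<in>{..<length C} - {j}. C ! i * x i)"
    using assms sum_split_j[OF assms(2), of "\<lambda>i y. C ! i * y" x] unfolding rep_def by simp
  have e2: "cnt C x = x j + (\<Sum>i\<in>{..<length C} - {j}. x i)"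
    using sum_split_j[OF assms(2), of "\<lambda>i y. y" x] by simp
  have "C ! j \<le> C ! j * x j" using assms(3) by simp
  hence le: "C ! j \<le> v" using e1 by linarith
  have le2: "C ! j \<le> C ! j * x j + (\<Sum>i\<in>{..<length C} - {j}. C ! i * x i)"
    using \<open>C ! j \<le> C ! j * x j\<close> by linarith
  have m: "C ! j * (x j - 1) = C ! j * x j - C ! j" by (simp add: right_diff_distrib')
  have "rep C (x(j := x j - 1)) (v - C ! j)"
    using sum_upd[OF assms(2), of "\<lambda>i y. C ! i * y" x "x j - 1"] e1 m le2 \<open>C ! j \<le> C ! j * x j\<close>
    unfolding rep_def by simp
  moreover have "cnt C (x(j := x j - 1)) = cnt C x - 1"
    using sum_upd[OF assms(2), of "\<lambda>i y. y" x "x j - 1"] e2 assms(3) by simp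
  ultimately show ?thesis using le by blast
qed

lemma opt_le_add:
  assumes "C \<noteq> []" "C ! 0 = 1" "j < length C" "C ! j \<le> v"
  shows "opt C v \<le> 1 + opt C (v - C ! j)"
proof -
  obtain x where x: "rep C x (v - C ! j)" "cnt C x = opt C (v - C ! j)"
    using opt_ex[OF assms(1,2)] by blast
  from rep_add[OF x(1) assms(3)] assms(4) x(2) show ?thesis
    using opt_le by fastforce
qed

lemma greedy_zero: "greedy_desc cs 0 = 0"
  by (induction cs) auto

lemma greedy_eq0: "greedy_desc cs v = 0 \<Longrightarrow> 1 \<in> set cs \<Longrightarrow> v = 0"
proof (induction cs arbitrary: v)
  case Nil thus ?case by simp
next
  case (Cons c cs)
  have h: "v div c = 0" "greedy_desc cs (v mod c) = 0" using Cons.prems(1) by simp_all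
  show ?case
  proof (cases "c = 1")
    case True thus ?thesis using h(1) by simp
  next
    case False
    hence "1 \<in> set cs" using Cons.prems(2) by simp
    hence "v mod c = 0" using Cons.IH h(2) by blast
    have "v = c * (v div c) + v mod c" by simp
    also have "\<dots> = 0" using h(1) \<open>v mod c = 0\<close> by simp
    finally show ?thesis .
  qed
qed

lemma greedy_eq1: "greedy_desc cs v = 1 \<Longrightarrow> 1 \<in> set cs \<Longrightarrow> v \<in> set cs"
proof (induction cs arbitrary: v)
  case Nil thus ?case by simp
next
  case (Cons c cs)
  have h: "v div c + greedy_desc cs (v mod c) = 1" using Cons.prems(1) by simp
  show ?case
  proof (cases "c = 1")
    case True
    hence "v + greedy_desc cs 0 = 1" using h by simp
    hence "v = 1" using greedy_zero by simp
    thus ?thesis using True by simp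
  next
    case False
    hence one: "1 \<in> set cs" using Cons.prems(2) by simp
    have dm: "v = c * (v div c) + v mod c" by simp
    show ?thesis
    proof (cases "v div c = 0")
      case True
      hence "greedy_desc cs (v mod c) = 1" using h by simp
      hence "v mod c \<in> set cs" using Cons.IH one by blast
      moreover have "v mod c = v" using True dm by simp
      ultimately show ?thesis by simp
    next
      case False
      hence "v div c = 1" "greedy_desc cs (v mod c) = 0" using h by simp_all
      hence "v mod c = 0" using greedy_eq0 one by blast
      hence "v = c" using \<open>v div c = 1\<close> dm by simp
      thus ?thesis by simp
    qed
  qed
qed

lemma greedy_small: "\<forall>c\<in>set cs. v < c \<Longrightarrow> greedy_desc (cs @ ds) v = greedy_desc ds v"
proof (induction cs)
  case Nil thus ?case by simp
next
  case (Cons c cs)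
  hence "v < c" "\<forall>c\<in>set cs. v < c" by auto
  hence "v div c = 0" "v mod c = v" by auto
  thus ?case using Cons.IH \<open>\<forall>c\<in>set cs. v < c\<close> by simp
qed

lemma greedy_rep: "1 \<in> set cs \<Longrightarrow> \<exists>x. rep cs x v \<and> cnt cs x = greedy_desc cs v"
proof (induction cs arbitrary: v)
  case Nil thus ?case by simp
next
  case (Cons c cs)
  show ?case
  proof (cases "c = 1")
    case True
    let ?x = "\<lambda>i. if i = 0 then v else (0::nat)"
    have "rep (c # cs) ?x v" unfolding rep_def
      using True by (simp add: sum.lessThan_Suc_shift del: sum.lessThan_Suc)
    moreover have "cnt (c # cs) ?x = greedy_desc (c # cs) v"
      using True greedy_zero by (simp add: sum.lessThan_Suc_shift del: sum.lessThan_Suc)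
    ultimately show ?thesis by blast
  next
    case False
    hence "1 \<in> set cs" using Cons by auto
    then obtain y where y: "rep cs y (v mod c)" "cnt cs y = greedy_desc cs (v mod c)"
      using Cons by blast
    let ?x = "\<lambda>i. if i = 0 then v div c else y (i - 1)"
    have "rep (c # cs) ?x v" using y(1) unfolding rep_def
      by (simp add: sum.lessThan_Suc_shift del: sum.lessThan_Suc)
    moreover have "cnt (c # cs) ?x = greedy_desc (c # cs) v"
      using y(2) by (simp add: sum.lessThan_Suc_shift del: sum.lessThan_Suc)
    ultimately show ?thesis by blast
  qed
qed

lemma sum_reflect: "(\<Sum>i<(n::nat). f (n - 1 - i)) = (\<Sum>i<n. (f i :: nat))"
  by (rule sum.reindex_bij_witness[of _ "\<lambda>i. n-1-i" "\<lambda>i. n-1-i"]) auto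

lemma rep_rev:
  assumes "rep (rev C) x v"
  shows "rep C (\<lambda>i. x (length C - 1 - i)) v \<and> cnt C (\<lambda>i. x (length C - 1 - i)) = cnt (rev C) x"
proof -
  let ?n = "length C"
  have "(\<Sum>i<?n. C ! i * x (?n - 1 - i)) = (\<Sum>i<?n. C ! (?n - 1 - (?n - 1 - i)) * x (?n - 1 - i))"
    by (rule sum.cong) auto
  also have "\<dots> = (\<Sum>i<?n. C ! (?n - 1 - i) * x i)"
    using sum_reflect[of "\<lambda>i. C ! (?n - 1 - i) * x i" ?n] by simp
  also have "\<dots> = (\<Sum>i<?n. rev C ! i * x i)"
    by (rule sum.cong) (auto simp: rev_nth)
  finally show ?thesis using assms sum_reflect[of x ?n] unfolding rep_def by simp
qed

lemma opt_le_grd: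
  assumes "C \<noteq> []" "C ! 0 = 1"
  shows "opt C v \<le> grd C v"
proof -
  have "1 \<in> set (rev C)" using assms by (metis nth_mem length_greater_0_conv set_rev)
  then obtain x where "rep (rev C) x v" "cnt (rev C) x = greedy_desc (rev C) v"
    using greedy_rep by blast
  thus ?thesis using rep_rev opt_le unfolding grd_def by (metis length_rev)
qed

lemma crit:
  assumes "C \<noteq> []" "C ! 0 = 1"
    and step: "\<And>w j. j < length C \<Longrightarrow> C ! j \<le> w \<Longrightarrow> grd C w \<le> 1 + grd C (w - C ! j)"
  shows "canonical C"
proof -
  have main: "\<And>x v. rep C x v \<Longrightarrow> cnt C x = k \<Longrightarrow> grd C v \<le> k" for k
  proof (induction k)
    case 0
    hence "\<forall>i<length C. x i = 0" by simp
    hence "v = 0" using 0 unfolding rep_def by simp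
    thus ?case by (simp add: grd_def greedy_zero)
  next
    case (Suc k)
    then obtain j where j: "j < length C" "x j > 0"
      by (metis gr0I lessThan_iff sum.neutral Zero_neq_Suc)
    from rep_dec[OF Suc.prems(1) j] have
      "rep C (x(j := x j - 1)) (v - C ! j)" "cnt C (x(j := x j - 1)) = k" "C ! j \<le> v"
      using Suc.prems(2) by auto
    hence "grd C (v - C ! j) \<le> k" using Suc.IH by blast
    thus ?case using step[OF j(1) \<open>C ! j \<le> v\<close>] by simp
  qed
  show ?thesis unfolding canonical_def counterexample_def
  proof (intro allI notI)
    fix w assume "0 < w \<and> opt C w < grd C w"
    obtain x where "rep C x w" "cnt C x = opt C w" using opt_ex[OF assms(1,2)] by blast
    with main show False using \<open>0 < w \<and> opt C w < grd C w\<close> by fastforce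
  qed
qed


lemma greedy_range_small: "v \<le> m \<Longrightarrow> greedy_desc (rev [1..<Suc m]) v = (if v = 0 then 0 else 1)"
proof (induction m arbitrary: v)
  case 0 thus ?case by simp
next
  case (Suc m)
  have r: "rev [1..<Suc (Suc m)] = Suc m # rev [1..<Suc m]" by simp
  show ?case
  proof (cases "v = Suc m")
    case True thus ?thesis using Suc.IH[of 0] r by simp
  next
    case False
    hence "v \<le> m" using Suc.prems by simp
    hence "v div Suc m = 0" "v mod Suc m = v" by auto
    thus ?thesis using Suc.IH[OF \<open>v \<le> m\<close>] r by simp
  qed
qed

lemma divq: "0 < (m::nat) \<Longrightarrow> (m * q + x) div m = q + x div m" by simp

lemma greedy_range: "0 < m \<Longrightarrow> greedy_desc (rev [1..<Suc m]) v = (v + m - 1) div m"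
proof -
  assume "0 < m"
  then obtain m' where Suc: "m = Suc m'" using not0_implies_Suc by blast
  have r: "rev [1..<Suc m] = m # rev [1..<m]" using Suc by simp
  have lt: "v mod m \<le> m'" using Suc by (metis less_Suc_eq_le mod_less_divisor zero_less_Suc)
  have "greedy_desc (rev [1..<Suc m]) v = v div m + (if v mod m = 0 then 0 else 1)"
    using r greedy_range_small[OF lt] Suc by simp
  also have "\<dots> = (v + m') div m"
  proof -
    have v: "v = m * (v div m) + v mod m" by simp
    have "(v + m') div m = (m * (v div m) + (v mod m + m')) div m"
      by (metis add.assoc v)
    also have "\<dots> = v div m + (v mod m + m') div m" using divq[OF \<open>0 < m\<close>] by blast
    finally have "(v + m') div m = v div m + (v mod m + m') div m" .
    moreover have "(v mod m + m') div m = (if v mod m = 0 then 0 else 1)"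
    proof (cases "v mod m = 0")
      case True thus ?thesis using Suc by simp
    next
      case False
      have "m \<le> v mod m + m'" using False Suc by linarith
      have "v mod m + m' < 2 * m" using lt Suc by linarith
      hence "(v mod m + m') div m = 1"
        using div_nat_eqI[of m 1 "v mod m + m'"] \<open>m \<le> v mod m + m'\<close> by simp
      thus ?thesis using False by simp
    qed
    ultimately show ?thesis by simp
  qed
  finally show ?thesis using Suc by simp
qed

definition Hf :: "(nat \<Rightarrow> nat) \<Rightarrow> nat \<Rightarrow> nat \<Rightarrow> nat" where
  "Hf g A r = (if r < A then g r else if r = A then 1 else 1 + g (r - A - 1))"

lemma H_step:
  fixes g :: "nat \<Rightarrow> nat"
  assumes gm: "\<And>u v. u \<le> v \<Longrightarrow> g u \<le> g v"
    and gs: "\<And>v j. j \<le> m \<Longrightarrow> g (v + j) \<le> g v + 1"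
    and g1: "\<And>v. v \<le> m \<Longrightarrow> g v \<le> 1"
    and g0: "g 0 = 0"
    and m2: "2 \<le> m" and mA: "m < A"
    and coin: "(1 \<le> c \<and> c \<le> m) \<or> c = A \<or> c = A + 1 \<or> c = 2 * A"
    and r: "r < 2 * A"
  shows "(c \<le> r \<longrightarrow> Hf g A r \<le> 1 + Hf g A (r - c)) \<and>
         (r < c \<longrightarrow> Hf g A r \<le> Hf g A (2 * A + r - c))"
proof -
  have I: "Hf g A r \<le> 1 + Hf g A (r - c)" if cr: "c \<le> r"
  proof -
    consider "1 \<le> c \<and> c \<le> m" | "c = A" | "c = A + 1" | "c = 2 * A" using coin by blast
    thus ?thesis
    proof cases
      case 1
      show ?thesis
      proof (cases "r < A")
        case True
        have "g r \<le> g (r - c) + 1" using gs[of c "r - c"] 1 cr by simp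
        moreover have "r - c < A" using True by simp
        ultimately show ?thesis using True unfolding Hf_def by simp
      next
        case False
        show ?thesis
        proof (cases "r = A")
          case True thus ?thesis unfolding Hf_def by simp
        next
          case False
          hence rA: "r > A" using \<open>\<not> r < A\<close> by simp
          consider "r - c > A" | "r - c = A" | "r - c < A" by linarith
          thus ?thesis
          proof cases
            case 1
            have "g (r - c - A - 1 + c) \<le> g (r - c - A - 1) + 1" using gs \<open>1 \<le> c \<and> c \<le> m\<close> by blast
            moreover have "r - c - A - 1 + c = r - A - 1" using 1 by simp
            ultimately show ?thesis using 1 rA unfolding Hf_def by simp
          next
            case 2
            have "r - A - 1 \<le> m" using 2 \<open>1 \<le> c \<and> c \<le> m\<close> by linarith
            hence "g (r - A - 1) \<le> 1" using g1 by blast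
            thus ?thesis using 2 rA unfolding Hf_def by simp
          next
            case 3
            have "r - A - 1 \<le> r - c" using \<open>1 \<le> c \<and> c \<le> m\<close> mA by linarith
            hence "g (r - A - 1) \<le> g (r - c)" using gm by blast
            thus ?thesis using 3 rA unfolding Hf_def by simp
          qed
        qed
      qed
    next
      case 2
      show ?thesis
      proof (cases "r = A")
        case True thus ?thesis unfolding Hf_def by simp
      next
        case False
        hence rA: "r > A" using cr 2 by simp
        have "g (r - A - 1) \<le> g (r - A)" using gm by simp
        thus ?thesis using rA r 2 unfolding Hf_def by simp
      qed
    next
      case 3
      have "r - c < A" using r 3 by simp
      thus ?thesis using cr 3 unfolding Hf_def by simp
    next
      case 4 thus ?thesis using cr r by simp
    qed
  qed
  have II: "Hf g A r \<le> Hf g A (2 * A + r - c)" if rc: "r < c"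
  proof -
    consider "1 \<le> c \<and> c \<le> m" | "c = A" | "c = A + 1" | "c = 2 * A" using coin by blast
    thus ?thesis
    proof cases
      case 1
      have "Hf g A r = g r" using rc 1 mA unfolding Hf_def by simp
      also have "\<dots> \<le> 1" using g1 rc 1 by simp
      also have "1 \<le> Hf g A (2 * A + r - c)"
      proof -
        have "\<not> 2 * A + r - c < A" "2 * A + r - c \<noteq> A" using 1 mA rc by linarith+
        thus ?thesis unfolding Hf_def by simp
      qed
      finally show ?thesis .
    next
      case 2
      show ?thesis
      proof (cases "r = 0")
        case True thus ?thesis using g0 2 unfolding Hf_def by simp
      next
        case False
        have "(1::nat) \<le> m" using m2 by simp
        from gs[OF this, of "r - 1"] have "g (r - 1 + 1) \<le> g (r - 1) + 1" .
        thus ?thesis using False 2 rc unfolding Hf_def by simp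
      qed
    next
      case 3
      consider "r = 0" | "r = 1" | "r \<ge> 2 \<and> r < A" | "r = A" using rc 3 by linarith
      thus ?thesis
      proof cases
        case 1 thus ?thesis using g0 3 unfolding Hf_def by simp
      next
        case 2
        have "g 1 \<le> 1" using g1 m2 by simp
        thus ?thesis using 2 3 mA m2 unfolding Hf_def by simp
      next
        case c3: 3
        from gs[OF m2, of "r - 2"] have "g (r - 2 + 2) \<le> g (r - 2) + 1" .
        moreover have "r - 2 + 2 = r" using c3 by linarith
        ultimately have gr: "g r \<le> g (r - 2) + 1" by simp
        have t: "\<not> 2 * A + r - c < A" "2 * A + r - c \<noteq> A" "2 * A + r - c - A - 1 = r - 2"
          using 3 c3 by linarith+
        have "Hf g A (2 * A + r - c) = 1 + g (r - 2)" using t unfolding Hf_def by simp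
        moreover have "Hf g A r = g r" using c3 unfolding Hf_def by simp
        ultimately show ?thesis using gr by simp
      next
        case 4
        have "\<not> 2 * A + r - c < A" using 4 3 mA m2 by linarith
        thus ?thesis using 4 3 unfolding Hf_def by simp
      qed
    next
      case 4 thus ?thesis using r by simp
    qed
  qed
  show ?thesis using I II by blast
qed


theorem theorem12:
  fixes C :: "nat list" and n :: nat
  assumes "n \<ge> 5"
    and "length C = n"
    and "coin_system C"
    and "C ! (n - 1) = 2 * C ! (n - 2) - C ! 1"
  shows "(canonical C \<and> \<not> canonical (take (n - 1) C)) \<longleftrightarrow>
           ((\<forall>i < n - 3. C ! i = i + 1) \<and>
            C ! (n - 2) = C ! (n - 3) + 1 \<and>
            C ! (n - 1) = 2 * C ! (n - 3) \<and>
            C ! (n - 3) > n - 2)"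
proof -
  note n5 = assms(1) and len = assms(2)
  have C0: "C ! 0 = 1" and srt: "sorted_wrt (<) C" and Cne: "C \<noteq> []"
    using assms(3) unfolding coin_system_def by auto
  have lt: "C ! i < C ! j" if "i < j" "j < n" for i j
    using sorted_wrt_nth_less[OF srt that(1)] that(2) len by simp
  have le: "C ! i \<le> C ! j" if "i \<le> j" "j < n" for i j
    using lt[of i j] that by (cases "i = j") auto
  have pos: "C ! j \<ge> 1" if "j < n" for j
    using le[of 0 j] that C0 by simp
  define C' where "C' = take (n - 1) C"
  have lenC': "length C' = n - 1" using len n5 unfolding C'_def by simp
  have nthC': "C' ! i = C ! i" if "i < n - 1" for i using that unfolding C'_def by simp
  have C'ne: "C' \<noteq> []" using lenC' n5 by auto
  have C'0: "C' ! 0 = 1" using nthC'[of 0] n5 C0 by simp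
  define b where "b = C ! (n - 2)"
  define A where "A = C ! (n - 3)"
  define d where "d = C ! 1"
  define cn where "cn = C ! (n - 1)"
  have revC: "rev C = cn # rev C'"
  proof -
    have "take (Suc (n - 1)) C = take (n - 1) C @ [C ! (n - 1)]"
      by (rule take_Suc_conv_app_nth) (use len n5 in simp)
    moreover have "Suc (n - 1) = n" using n5 by simp
    ultimately have "C = C' @ [cn]" using len unfolding C'_def cn_def by simp
    thus ?thesis by (metis rev.simps(2) rev_rev_ident rev_swap)
  qed
  have revC': "rev C' = b # rev (take (n - 2) C)"
  proof -
    have "take (Suc (n - 2)) C = take (n - 2) C @ [C ! (n - 2)]"
      by (rule take_Suc_conv_app_nth) (use len n5 in simp)
    moreover have "Suc (n - 2) = n - 1" using n5 by simp
    ultimately have "C' = take (n - 2) C @ [b]" unfolding C'_def b_def by simp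
    thus ?thesis by simp
  qed
  have dA: "d < A" unfolding d_def A_def by (rule lt) (use n5 in auto)
  have d2: "d \<ge> 2" using lt[of 0 1] n5 C0 unfolding d_def by simp
  have Ab: "A < b" unfolding b_def A_def by (rule lt) (use n5 in auto)
  have bcn: "b < cn" unfolding b_def cn_def by (rule lt) (use n5 in auto)
  have cn_eq: "cn = 2 * b - d" using assms(4) unfolding cn_def b_def d_def by simp
  have grdC: "grd C v = v div cn + grd C' (v mod cn)" for v
    unfolding grd_def revC by simp
  have grdC': "grd C' v = v div b + greedy_desc (rev (take (n - 2) C)) (v mod b)" for v
    unfolding grd_def revC' by simp
  have step': "grd C' v = 1 + grd C' (v - b)" if "b \<le> v" for v
  proof -
    have "v div b = Suc ((v - b) div b)" using le_div_geq[of b v] that Ab by simp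
    moreover have "v mod b = (v - b) mod b" using le_mod_geq[OF that] .
    ultimately show ?thesis using grdC'[of v] grdC'[of "v - b"] by simp
  qed
  have smallC: "grd C v = grd C' v" if "v < cn" for v
    using grdC[of v] that by simp
  have one_in: "1 \<in> set (rev C')" using C'ne C'0 by (metis nth_mem length_greater_0_conv set_rev)
  have grd0: "grd C' v = 0 \<Longrightarrow> v = 0" for v
    using greedy_eq0 one_in unfolding grd_def by blast
  have grd1: "grd C' v = 1 \<Longrightarrow> \<exists>k < n - 1. C ! k = v" for v
  proof -
    assume "grd C' v = 1"
    hence "v \<in> set C'" using greedy_eq1 one_in unfolding grd_def by (metis set_rev)
    then obtain k where "k < length C'" "C' ! k = v" by (metis in_set_conv_nth)
    thus ?thesis using lenC' nthC' by auto
  qed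
  have grdz: "grd C' 0 = 0" unfolding grd_def by (rule greedy_zero)
  show ?thesis
  proof
    assume L: "canonical C \<and> \<not> canonical (take (n - 1) C)"
    show "(\<forall>i < n - 3. C ! i = i + 1) \<and> C ! (n - 2) = C ! (n - 3) + 1 \<and>
            C ! (n - 1) = 2 * C ! (n - 3) \<and> C ! (n - 3) > n - 2"
    proof -
      have canC: "grd C v \<le> opt C v" if "0 < v" for v
        using L that unfolding canonical_def counterexample_def by (meson not_le)
      have "\<exists>w. counterexample C' w" using L unfolding canonical_def C'_def by blast
      define w where "w = (LEAST w. counterexample C' w)"
      have cw: "counterexample C' w" unfolding w_def using \<open>\<exists>w. counterexample C' w\<close> by (metis LeastI)
      have below: "grd C' v \<le> opt C' v" if "v < w" for v
      proof (cases "v = 0")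
        case True thus ?thesis using grdz by simp
      next
        case False
        have "\<not> counterexample C' v" using that not_less_Least unfolding w_def by blast
        thus ?thesis using False unfolding counterexample_def by simp
      qed
      have w0: "0 < w" and wk: "opt C' w < grd C' w" using cw unfolding counterexample_def by auto
      obtain x where x: "rep C' x w" "cnt C' x = opt C' w" using opt_ex[OF C'ne C'0] by blast
      define k where "k = opt C' w"
      have wcn: "cn \<le> w"
      proof (rule ccontr)
        assume "\<not> cn \<le> w"
        hence "w < cn" by simp
        let ?x = "x(n - 1 := 0)"
        have "(\<Sum>i<n. C ! i * ?x i) = (\<Sum>i<n - 1. C ! i * ?x i)"
          using n5 by (metis (no_types, lifting) Suc_diff_1 fun_upd_same mult_0_right
              add_0_right sum.lessThan_Suc zero_less_iff_neq_zero numeral_eq_Suc zero_less_Suc less_le_trans)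
        also have "\<dots> = (\<Sum>i<n - 1. C' ! i * x i)" by (rule sum.cong) (auto simp: nthC')
        finally have "rep C ?x w" using x(1) len lenC' unfolding rep_def by simp
        hence "opt C w \<le> cnt C ?x" by (rule opt_le)
        also have "cnt C ?x = cnt C' x"
        proof -
          have "(\<Sum>i<n. ?x i) = (\<Sum>i<n - 1. ?x i)"
            using n5 by (metis (no_types, lifting) Suc_diff_1 fun_upd_same
              add_0_right sum.lessThan_Suc zero_less_iff_neq_zero numeral_eq_Suc zero_less_Suc less_le_trans)
          also have "\<dots> = (\<Sum>i<n - 1. x i)" by (rule sum.cong) auto
          finally show ?thesis using len lenC' by simp
        qed
        finally have "opt C w \<le> opt C' w" using x(2) by simp
        moreover have "grd C w = grd C' w" using smallC \<open>w < cn\<close> by simp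
        ultimately show False using canC[OF w0] wk by simp
      qed
      have wb: "b < w" using wcn bcn by simp
      have kpos: "1 \<le> k"
      proof (rule ccontr)
        assume "\<not> 1 \<le> k"
        hence "cnt C' x = 0" using x(2) unfolding k_def by simp
        hence "\<forall>i<length C'. x i = 0" by simp
        hence "w = 0" using x(1) unfolding rep_def by simp
        thus False using w0 by simp
      qed
      have nb: "n - 2 < length C'" "C' ! (n - 2) = b" using lenC' nthC'[of "n - 2"] n5 unfolding b_def by auto
      have xb: "x (n - 2) = 0"
      proof (rule ccontr)
        assume "x (n - 2) \<noteq> 0"
        hence "0 < x (n - 2)" by simp
        from rep_dec[OF x(1) nb(1) this] nb(2)
        have "opt C' (w - b) \<le> k - 1" using opt_le x(2) unfolding k_def by metis
        moreover have "grd C' (w - b) \<le> opt C' (w - b)" using below Ab wb by simp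
        moreover have "grd C' w = 1 + grd C' (w - b)" using step' wb by simp
        ultimately show False using wk kpos unfolding k_def by linarith
      qed
      have used: "w - C ! j < b" if "j < n - 1" "0 < x j" for j
      proof (rule ccontr)
        assume "\<not> w - C ! j < b"
        hence ub: "b \<le> w - C ! j" by simp
        have jl: "j < length C'" using that lenC' by simp
        have cj: "C' ! j = C ! j" using nthC' that by simp
        have cpos: "C ! j \<ge> 1" using pos that by simp
        from rep_dec[OF x(1) jl that(2)] cj
        have ou: "opt C' (w - C ! j) \<le> k - 1" using opt_le x(2) unfolding k_def by metis
        have gu: "grd C' (w - C ! j) \<le> opt C' (w - C ! j)" using below cpos w0 ub by simp
        have gu2: "grd C' (w - C ! j) = 1 + grd C' (w - C ! j - b)" using step' ub by simp
        have gw: "grd C' w = 1 + grd C' (w - b)" using step' wb by simp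
        have g1: "grd C' (w - b) \<le> opt C' (w - b)" using below Ab wb by simp
        have g2: "opt C' (w - b) \<le> 1 + opt C' (w - b - C' ! j)"
          by (rule opt_le_add[OF C'ne C'0 jl]) (use ub cj Ab in linarith)
        have g3: "opt C' (w - b - C' ! j) \<le> grd C' (w - b - C' ! j)"
          by (rule opt_le_grd[OF C'ne C'0])
        have "w - b - C' ! j = w - C ! j - b" using cj by simp
        hence "grd C' w \<le> 1 + grd C' (w - C ! j)" using gw g1 g2 g3 gu2 by simp
        hence "grd C' w \<le> k" using gu ou kpos by linarith
        thus False using wk unfolding k_def by simp
      qed
      have leA: "C ! j \<le> A" if "j < n - 1" "0 < x j" for j
      proof -
        have "j \<noteq> n - 2" using xb that by auto
        hence "j \<le> n - 3" using that by simp
        thus ?thesis using le[of j "n - 3"] n5 unfolding A_def by simp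
      qed
      obtain j0 where j0: "j0 < n - 1" "0 < x j0"
      proof (rule ccontr)
        assume "\<not> thesis"
        hence "\<forall>i<length C'. x i = 0" using that lenC' by auto
        hence "cnt C' x = 0" by simp
        thus False using kpos x(2) unfolding k_def by simp
      qed
      have wbA: "w < b + A" using used[OF j0] leA[OF j0] by linarith
      have bAd: "b < A + d" using wbA wcn cn_eq by linarith
      have g2b: "grd C (2 * b - 1) = d"
      proof -
        have "(2 * b - 1) div cn = 1" using div_nat_eqI[of cn 1 "2 * b - 1"] cn_eq d2 bcn dA Ab by simp
        moreover have "(2 * b - 1) mod cn = d - 1"
        proof -
          have "(2 * b - 1) mod cn = (2 * b - 1 - cn) mod cn" using le_mod_geq[of cn "2 * b - 1"] cn_eq d2 by simp
          also have "2 * b - 1 - cn = d - 1" using cn_eq d2 dA Ab by simp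
          also have "(d - 1) mod cn = d - 1" using cn_eq d2 dA Ab by simp
          finally show ?thesis .
        qed
        moreover have "grd C' (d - 1) = d - 1"
        proof -
          have C'split: "C' = 1 # drop 1 C'" using C'ne C'0 by (metis Cons_nth_drop_Suc One_nat_def drop0 length_greater_0_conv)
          have big: "\<forall>c\<in>set (rev (drop 1 C')). d - 1 < c"
          proof
            fix c assume "c \<in> set (rev (drop 1 C'))"
            then obtain i where i: "i < length C' - 1" "c = drop 1 C' ! i" by (auto simp: in_set_conv_nth)
            hence "c = C ! (Suc i)" using nthC' lenC' by simp
            moreover have "d \<le> C ! (Suc i)" unfolding d_def using le[of 1 "Suc i"] i lenC' by simp
            ultimately show "d - 1 < c" using d2 by simp
          qed
          have "rev C' = rev (drop 1 C') @ [1]" using C'split by (metis rev.simps(2))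
          hence "grd C' (d - 1) = greedy_desc [1] (d - 1)" unfolding grd_def using greedy_small[OF big] by simp
          thus ?thesis by simp
        qed
        ultimately show ?thesis using grdC[of "2 * b - 1"] d2 by simp
      qed
      have o2b: "opt C (2 * b - 1) \<le> 2 + (b - 1 - A)"
      proof -
        have i1: "n - 2 < length C" "n - 3 < length C" using len n5 by auto
        have "opt C (2 * b - 1) \<le> 1 + opt C (2 * b - 1 - C ! (n - 2))"
          by (rule opt_le_add[OF Cne C0 i1(1)]) (use Ab in \<open>simp add: b_def\<close>)
        also have "2 * b - 1 - C ! (n - 2) = b - 1" unfolding b_def by simp
        also have "opt C (b - 1) \<le> 1 + opt C (b - 1 - C ! (n - 3))"
          by (rule opt_le_add[OF Cne C0 i1(2)]) (use Ab in \<open>simp add: A_def\<close>)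
        also have "opt C (b - 1 - C ! (n - 3)) \<le> b - 1 - A"
          using opt_le_self[OF Cne C0] unfolding A_def by simp
        finally show ?thesis by simp
      qed
      have "d \<le> 2 + (b - 1 - A)" using canC[of "2 * b - 1"] g2b o2b Ab by simp
      hence bAd2: "b = A + d - 1" using bAd Ab by linarith
      have eqA: "C ! j = A" if "j < n - 1" "0 < x j" for j
        using used[OF that] leA[OF that] wcn cn_eq bAd2 d2 by linarith
      have wAk: "w = A * k"
      proof -
        have "w = (\<Sum>i<n - 1. C' ! i * x i)" using x(1) lenC' unfolding rep_def by simp
        also have "\<dots> = (\<Sum>i<n - 1. A * x i)"
        proof (rule sum.cong)
          fix i assume "i \<in> {..<n - 1}"
          thus "C' ! i * x i = A * x i" using eqA[of i] nthC'[of i] by (cases "x i = 0") auto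
        qed simp
        also have "\<dots> = A * (\<Sum>i<n - 1. x i)" by (rule sum_distrib_left[symmetric])
        also have "\<dots> = A * k" using x(2) lenC' unfolding k_def by simp
        finally show ?thesis .
      qed
      have k2: "k = 2"
      proof -
        have "2 * A \<le> w" using wcn cn_eq bAd2 d2 by linarith
        hence "2 * A \<le> A * k" using wAk by simp
        hence "2 \<le> k" using dA by (metis mult.commute mult_le_cancel2 not_gr0 not_less0)
        moreover have "k < 3"
        proof (rule ccontr)
          assume "\<not> k < 3"
          hence "A * 3 \<le> A * k" by simp
          thus False using wAk wbA bAd2 dA by linarith
        qed
        ultimately show ?thesis by simp
      qed
      have w2A: "w = 2 * A" using wAk k2 by simp
      have dd: "d = 2" using w2A wcn cn_eq bAd2 d2 by linarith
      have bA1: "b = A + 1" using bAd2 dd by simp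
      have cn2A: "cn = 2 * A" using cn_eq bA1 dd by simp
      have gA1: "grd C' (A - 1) \<ge> 2"
      proof -
        have "grd C' (2 * A) = 1 + grd C' (A - 1)" using step'[of "2 * A"] bA1 dA by simp
        moreover have "opt C' (2 * A) = 2" using w2A k2 unfolding k_def by simp
        ultimately show ?thesis using wk w2A by simp
      qed
      have Ri: "C ! i = i + 1" if "i < n - 3" for i
        using that
      proof (induction i)
        case 0 thus ?case using C0 by simp
      next
        case (Suc i)
        have IH: "C ! i = i + 1" using Suc by simp
        have gt: "C ! (Suc i) > i + 1" using lt[of i "Suc i"] Suc.prems IH by simp
        show ?case
        proof (rule ccontr)
          assume ne: "C ! Suc i \<noteq> Suc i + 1"
          define e where "e = C ! Suc i"
          have e3: "e \<ge> i + 3" using gt ne unfolding e_def by simp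
          have eA: "e < A" unfolding e_def A_def using lt[of "Suc i" "n - 3"] Suc.prems n5 by simp
          have "A + e < w" using w2A eA by simp
          hence "grd C' (A + e) \<le> opt C' (A + e)" using below by simp
          also have "opt C' (A + e) \<le> 2"
          proof -
            have i1: "n - 3 < length C'" "Suc i < length C'" using lenC' Suc.prems n5 by auto
            have c1: "C' ! (n - 3) = A" "C' ! Suc i = e" using nthC' Suc.prems n5 unfolding A_def e_def by auto
            have "opt C' (A + e) \<le> 1 + opt C' (A + e - C' ! (n - 3))"
              by (rule opt_le_add[OF C'ne C'0 i1(1)]) (use c1 in simp)
            also have "A + e - C' ! (n - 3) = e" using c1 by simp
            also have "opt C' e \<le> 1 + opt C' (e - C' ! Suc i)"
              by (rule opt_le_add[OF C'ne C'0 i1(2)]) (use c1 in simp)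
            also have "opt C' (e - C' ! Suc i) = 0"
              using opt_le_self[OF C'ne C'0, of 0] c1 by simp
            finally show ?thesis by simp
          qed
          finally have o: "grd C' (A + e) \<le> 2" .
          have "grd C' (A + e) = 1 + grd C' (e - 1)" using step'[of "A + e"] bA1 e3 by simp
          moreover have "grd C' (e - 1) \<noteq> 0" using grd0 e3 by fastforce
          moreover have "grd C' (e - 1) \<noteq> 1"
          proof
            assume "grd C' (e - 1) = 1"
            then obtain k' where k': "k' < n - 1" "C ! k' = e - 1" using grd1 by blast
            show False
            proof (cases "k' \<le> i")
              case True
              hence "C ! k' \<le> C ! i" using le[of k' i] Suc.prems n5 by simp
              thus False using k' IH e3 by simp
            next
              case False
              hence "C ! Suc i \<le> C ! k'" using le[of "Suc i" k'] k' n5 by simp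
              thus False using k' e3 unfolding e_def by simp
            qed
          qed
          ultimately show False using o by simp
        qed
      qed
      have An: "A > n - 2"
      proof (rule ccontr)
        assume "\<not> A > n - 2"
        have c4: "C ! (n - 4) = n - 3" using Ri[of "n - 4"] n5 by simp
        have "C ! (n - 4) < A" unfolding A_def using lt[of "n - 4" "n - 3"] n5 by simp
        hence Aeq: "A = n - 2" using c4 \<open>\<not> A > n - 2\<close> by simp
        have i1: "n - 4 < length C'" "C' ! (n - 4) = A - 1" using lenC' nthC'[of "n - 4"] n5 c4 Aeq by auto
        have "grd C' (A - 1) \<le> opt C' (A - 1)" using below w2A dA by simp
        also have "opt C' (A - 1) \<le> 1 + opt C' (A - 1 - C' ! (n - 4))"
          by (rule opt_le_add[OF C'ne C'0 i1(1)]) (use i1 in simp)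
        also have "opt C' (A - 1 - C' ! (n - 4)) = 0"
          using opt_le_self[OF C'ne C'0, of 0] i1 by simp
        finally show False using gA1 by simp
      qed
      show ?thesis using Ri bA1 cn2A An unfolding b_def A_def cn_def by simp
    qed
  next
    assume R: "(\<forall>i < n - 3. C ! i = i + 1) \<and> C ! (n - 2) = C ! (n - 3) + 1 \<and>
            C ! (n - 1) = 2 * C ! (n - 3) \<and> C ! (n - 3) > n - 2"
    hence Ri: "\<And>i. i < n - 3 \<Longrightarrow> C ! i = i + 1" and bA: "b = A + 1" and cnA: "cn = 2 * A"
      and An: "A > n - 2"
      unfolding b_def A_def cn_def by auto
    define m where "m = n - 3"
    have m2: "2 \<le> m" "m < A" using n5 An unfolding m_def by auto
    have tk: "take (n - 3) C = [1..<Suc m]"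
      by (rule nth_equalityI) (use len n5 Ri in \<open>auto simp: m_def nth_upt simp del: upt_Suc\<close>)
    have tk2: "take (n - 2) C = take (n - 3) C @ [A]"
    proof -
      have "take (Suc (n - 3)) C = take (n - 3) C @ [C ! (n - 3)]"
        by (rule take_Suc_conv_app_nth) (use len n5 in simp)
      moreover have "Suc (n - 3) = n - 2" using n5 by simp
      ultimately show ?thesis unfolding A_def by simp
    qed
    have nc: "\<not> canonical C'"
    proof -
      have jA: "n - 3 < length C'" "C' ! (n - 3) = A" using lenC' nthC'[of "n - 3"] n5 unfolding A_def by auto
      have "opt C' (2 * A) \<le> 1 + opt C' (2 * A - A)"
        using opt_le_add[OF C'ne C'0 jA(1), of "2 * A"] jA(2) by simp
      also have "opt C' (2 * A - A) \<le> 1 + opt C' (A - A)"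
        using opt_le_add[OF C'ne C'0 jA(1), of A] jA(2) by simp
      also have "opt C' (A - A) \<le> 0" using opt_le_self[OF C'ne C'0, of 0] by simp
      finally have o2: "opt C' (2 * A) \<le> 2" by simp
      have g: "grd C' (2 * A) = 1 + grd C' (A - 1)" using step'[of "2 * A"] bA m2 by simp
      have "grd C' (A - 1) \<noteq> 0" using grd0 m2 by fastforce
      moreover have "grd C' (A - 1) \<noteq> 1"
      proof
        assume "grd C' (A - 1) = 1"
        then obtain k where k: "k < n - 1" "C ! k = A - 1" using grd1 by blast
        show False
        proof (cases "k < n - 3")
          case True thus ?thesis using k Ri[OF True] An by simp
        next
          case False
          hence "C ! (n - 3) \<le> C ! k" using le[of "n - 3" k] k by simp
          thus ?thesis using k m2 unfolding A_def by simp
        qed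
      qed
      ultimately have "grd C' (2 * A) > 2" using g by simp
      hence "counterexample C' (2 * A)" using o2 m2 unfolding counterexample_def by simp
      thus ?thesis unfolding canonical_def by blast
    qed
    have canC: "canonical C"
    proof (rule crit[OF Cne C0])
      fix w j assume j: "j < length C" "C ! j \<le> w"
      define g where "g = (\<lambda>v. greedy_desc (rev [1..<Suc m]) v)"
      have gf: "g v = (v + m - 1) div m" for v using greedy_range m2 unfolding g_def by simp
      have revCf: "rev C = [2 * A, A + 1, A] @ rev [1..<Suc m]"
        using revC revC' tk2 tk bA cnA by simp
      have grdf: "grd C v = v div (2 * A) + ((v mod (2 * A)) div (A + 1) +
          ((v mod (2 * A)) mod (A + 1)) div A + g (((v mod (2 * A)) mod (A + 1)) mod A))" for v
        unfolding grd_def revCf g_def by simp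
      have Hform: "r div (A + 1) + (r mod (A + 1)) div A + g ((r mod (A + 1)) mod A) = Hf g A r"
        if "r < 2 * A" for r
      proof -
        consider "r < A" | "r = A" | "A < r" by linarith
        thus ?thesis
        proof cases
          case 1 thus ?thesis unfolding Hf_def by simp
        next
          case 2
          have "A div A = 1" "(m - 1) div m = 0" using m2 by simp_all
          thus ?thesis using 2 unfolding Hf_def gf by simp
        next
          case 3
          have "r div (A + 1) = 1" using div_nat_eqI[of "A + 1" 1 r] 3 that by simp
          moreover have "r mod (A + 1) = r - (A + 1)"
          proof -
            have "r mod (A + 1) = (r - (A + 1)) mod (A + 1)" using le_mod_geq[of "A + 1" r] 3 by simp
            also have "\<dots> = r - (A + 1)" using that by simp
            finally show ?thesis .
          qed
          moreover have "r - (A + 1) < A" using that by linarith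
          ultimately show ?thesis using 3 unfolding Hf_def by simp
        qed
      qed
      have grdq: "grd C (2 * A * q + r) = q + Hf g A r" if "r < 2 * A" for q r
      proof -
        have "(2 * A * q + r) div (2 * A) = q" using that by simp
        moreover have "(2 * A * q + r) mod (2 * A) = r" using that by simp
        ultimately show ?thesis using grdf[of "2 * A * q + r"] Hform[OF that] by simp
      qed
      have gm: "g u \<le> g v" if "u \<le> v" for u v unfolding gf using that by (simp add: div_le_mono)
      have gs: "g (v + i) \<le> g v + 1" if "i \<le> m" for v i
      proof -
        have "g (v + i) \<le> (v + m - 1 + m) div m" unfolding gf using that by (simp add: div_le_mono)
        also have "\<dots> = (v + m - 1) div m + 1"
          using div_add_self2[of m "v + m - 1"] m2 by simp
        also have "\<dots> = g v + 1" unfolding gf by simp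
        finally show ?thesis .
      qed
      have g1: "g v \<le> 1" if "v \<le> m" for v
      proof -
        have "v + m - 1 < 2 * m" using that m2 by linarith
        hence "(v + m - 1) div m < 2" using less_mult_imp_div_less by blast
        thus ?thesis unfolding gf by simp
      qed
      have g0: "g 0 = 0" unfolding gf using m2 by simp
      have coin: "(1 \<le> C ! j \<and> C ! j \<le> m) \<or> C ! j = A \<or> C ! j = A + 1 \<or> C ! j = 2 * A"
      proof -
        consider "j < n - 3" | "j = n - 3" | "j = n - 2" | "j = n - 1" using j len by linarith
        thus ?thesis
        proof cases
          case 1 thus ?thesis using Ri[OF 1] unfolding m_def by simp
        next
          case 2 thus ?thesis unfolding A_def by simp
        next
          case 3 thus ?thesis using bA unfolding b_def by simp
        next
          case 4 thus ?thesis using cnA unfolding cn_def by simp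
        qed
      qed
      define q where "q = w div (2 * A)"
      define r where "r = w mod (2 * A)"
      have A0: "0 < A" using m2 by simp
      have wqr: "w = 2 * A * q + r" unfolding q_def r_def by simp
      have rlt: "r < 2 * A" unfolding r_def using A0 by simp
      have cle: "C ! j \<le> 2 * A" using coin m2 by auto
      note HS = H_step[OF gm gs g1 g0 m2 coin rlt]
      show "grd C w \<le> 1 + grd C (w - C ! j)"
      proof (cases "C ! j \<le> r")
        case True
        have "w - C ! j = 2 * A * q + (r - C ! j)" using wqr True by simp
        moreover have "r - C ! j < 2 * A" using rlt by linarith
        ultimately have "grd C (w - C ! j) = q + Hf g A (r - C ! j)" using grdq by simp
        thus ?thesis using grdq[OF rlt] wqr HS True by simp
      next
        case False
        hence q1: "q \<ge> 1" using j(2) wqr by (cases q) auto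
        then obtain q' where q': "q = Suc q'" using not0_implies_Suc by fastforce
        have "2 * A * q = 2 * A * q' + 2 * A" using q' by simp
        hence "w - C ! j = 2 * A * q' + (2 * A + r - C ! j)" using wqr cle by linarith
        hence "w - C ! j = 2 * A * (q - 1) + (2 * A + r - C ! j)" using q' by simp
        moreover have "2 * A + r - C ! j < 2 * A" using False cle A0 by linarith
        ultimately have "grd C (w - C ! j) = (q - 1) + Hf g A (2 * A + r - C ! j)" using grdq by simp
        thus ?thesis using grdq[OF rlt] wqr HS False q1 by simp
      qed
    qed
    show "canonical C \<and> \<not> canonical (take (n - 1) C)" using canC nc unfolding C'_def by simp
  qed
qed
end
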